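(* Let $\sigma:\mathbb R\to\mathbb R$ be a real-analytic function such that $\sigma^{(n_j)}(0)\neq0$ for an infinite sequence of distinct indices $\{n_j\}_{j=1}^\infty$. Let $d\in\mathbb N$ and let $w_1,\dots,w_m\in\mathbb R^d\setminus\{0\}$ satisfy $w_k\neq\pm w_j$ for all $1\leq k<j\leq m$. Then the set of functions on $\mathbb R^d$ $$\{\sigma(w_i^\top x),\ \sigma'(w_i^\top x)x_1,\ \dots,\ \sigma'(w_i^\top x)x_d\}_{i=1}^m$$ (where $x_t$ denotes the $t$-th coordinate of $x$) consists of $m(d+1)$ linearly independent functions. *)

theory Defs
  imports "HOL-Analysis.Analysis"
begin

definition real_analytic :: "(real \<Rightarrow> real) \<Rightarrow> bool" where
  "real_analytic f \<longleftrightarrow>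
     (\<forall>x0. \<exists>r>0. \<exists>a :: nat \<Rightarrow> real.
        \<forall>x. \<bar>x - x0\<bar> < r \<longrightarrow> (\<lambda>n. a n * (x - x0) ^ n) sums f x)"

definition lin_indep_family :: "'i set \<Rightarrow> ('i \<Rightarrow> 'x \<Rightarrow> real) \<Rightarrow> bool" where
  "lin_indep_family I F \<longleftrightarrow>
     (\<forall>c :: 'i \<Rightarrow> real. (\<forall>x. (\<Sum>i\<in>I. c i * F i x) = 0) \<longrightarrow> (\<forall>i\<in>I. c i = 0))"

end

theory Submission
  imports Defs
begin


lemma diffs_pow: "(diffs ^^ n) a k = (fact (k+n) / fact k) * (a (k+n) :: real)"
proof (induction n arbitrary: k)
  case 0 then show ?case by simp
next
  case (Suc n)
  have "(diffs ^^ Suc n) a k = real (Suc k) * (diffs ^^ n) a (Suc k)"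
    by (simp add: diffs_def)
  also have "\<dots> = real (Suc k) * (fact (Suc k + n) / fact (Suc k) * a (Suc k + n))"
    using Suc by simp
  also have "\<dots> = fact (k + Suc n) / fact k * a (k + Suc n)"
  proof -
    have "Suc k + n = k + Suc n" by simp
    moreover have "fact (Suc k) = real (Suc k) * (fact k :: real)" by (simp add: fact_Suc)
    ultimately show ?thesis by (simp del: of_nat_Suc)
  qed
  finally show ?case .
qed

lemma higher_deriv_powser_sums:
  fixes f :: "real \<Rightarrow> real"
  assumes sm: "\<And>x. \<bar>x\<bar> < r \<Longrightarrow> (\<lambda>n. a n * x ^ n) sums f x"
  shows "\<And>x. \<bar>x\<bar> < r \<Longrightarrow> (\<lambda>k. (diffs ^^ n) a k * x ^ k) sums (deriv ^^ n) f x"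
  proof (induction n)
    case 0 then show ?case using sm by simp
  next
    case (Suc n)
    define b where "b = (diffs ^^ n) a"
    have IH: "\<And>x. \<bar>x\<bar> < r \<Longrightarrow> (\<lambda>k. b k * x ^ k) sums (deriv ^^ n) f x"
      using Suc.IH b_def by simp
    have summ: "\<And>z. norm z < r \<Longrightarrow> summable (\<lambda>k. b k * z ^ k)"
      using IH sums_summable by fastforce
    have D: "((\<lambda>z. \<Sum>k. b k * z^k) has_field_derivative (\<Sum>k. diffs b k * x^k)) (at x)"
      using termdiffs_strong'[of r b x] summ Suc.prems by simp
    have D2: "((deriv ^^ n) f has_field_derivative (\<Sum>k. diffs b k * x^k)) (at x)"
    proof (rule has_field_derivative_transform_within_open[OF D, of "ball 0 r"])
      show "x \<in> ball 0 r" using Suc.prems by simp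
      fix z :: real assume "z \<in> ball 0 r"
      then have "\<bar>z\<bar> < r" by simp
      from sums_unique[OF IH[OF this]] show "(\<Sum>k. b k * z^k) = (deriv ^^ n) f z" by simp
    qed simp
    have "(deriv ^^ Suc n) f x = (\<Sum>k. diffs b k * x^k)"
      using DERIV_imp_deriv[OF D2] by simp
    moreover have "summable (\<lambda>k. diffs b k * x^k)"
      using termdiff_converges[of x r b] summ Suc.prems by simp
    ultimately show ?case using b_def summable_sums by fastforce
  qed

lemma higher_deriv_powser:
  fixes f :: "real \<Rightarrow> real"
  assumes r: "r > 0" and sm: "\<And>x. \<bar>x\<bar> < r \<Longrightarrow> (\<lambda>n. a n * x ^ n) sums f x"
  shows "(deriv ^^ n) f 0 = fact n * a n"
proof -
  have "(\<lambda>k. (diffs ^^ n) a k * 0 ^ k) sums (deriv ^^ n) f 0"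
    using r by (intro higher_deriv_powser_sums[where r=r]) (auto intro: sm)
  then have "(diffs ^^ n) a 0 = (deriv ^^ n) f 0" by simp
  then show ?thesis by (simp add: diffs_pow)
qed

lemma powser_zero_unique:
  assumes r: "r > 0" and sm: "\<And>x. \<bar>x\<bar> < r \<Longrightarrow> (\<lambda>n. e n * x ^ n) sums (0::real)"
  shows "e n = 0"
proof -
  have z: "(deriv ^^ k) (\<lambda>_::real. 0::real) = (\<lambda>_. 0)" for k
    by (induction k) (auto simp: DERIV_imp_deriv)
  show ?thesis using higher_deriv_powser[of r e "\<lambda>_. 0" n] r sm z by simp
qed


lemma lin_pow_to0:
  fixes r :: real assumes "\<bar>r\<bar> < 1"
  shows "(\<lambda>n. (c + real n * b) * r ^ n) \<longlonglongrightarrow> 0"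
proof -
  have "(\<lambda>n. c * r ^ n + b * (real n * r ^ n)) \<longlonglongrightarrow> c * 0 + b * 0"
    using assms by (intro tendsto_intros LIMSEQ_power_zero powser_times_n_limit_0) auto
  then show ?thesis by (simp add: algebra_simps)
qed

lemma asym_indep:
  fixes \<alpha> c b :: "'i \<Rightarrow> real"
  assumes "finite I" "infinite S"
    and "\<forall>i\<in>I. \<alpha> i \<noteq> 0"
    and "\<forall>i\<in>I. \<forall>j\<in>I. i \<noteq> j \<longrightarrow> \<bar>\<alpha> i\<bar> \<noteq> \<bar>\<alpha> j\<bar>"
    and "\<forall>n\<in>S. (\<Sum>i\<in>I. (c i + real n * b i) * \<alpha> i ^ n) = 0"
  shows "\<forall>i\<in>I. c i = 0 \<and> b i = 0"
  using assms
proof (induction "card I" arbitrary: I rule: less_induct)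
  case less
  show ?case
  proof (cases "I = {}")
    case True then show ?thesis by simp
  next
    case False
    define M where "M = Max ((\<lambda>i. \<bar>\<alpha> i\<bar>) ` I)"
    have "M \<in> (\<lambda>i. \<bar>\<alpha> i\<bar>) ` I" unfolding M_def using False less.prems by simp
    then obtain i0 where i0: "i0 \<in> I" "\<bar>\<alpha> i0\<bar> = M" by auto
    have lt: "\<bar>\<alpha> i\<bar> < \<bar>\<alpha> i0\<bar>" if "i \<in> I - {i0}" for i
    proof -
      have "\<bar>\<alpha> i\<bar> \<le> M" unfolding M_def using that less.prems by auto
      moreover have "\<bar>\<alpha> i\<bar> \<noteq> \<bar>\<alpha> i0\<bar>" using that i0 less.prems(4) by auto
      ultimately show ?thesis using i0 by simp
    qed
    have a0: "\<alpha> i0 \<noteq> 0" using i0 less.prems by auto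
    define h where "h n = (\<Sum>i\<in>I - {i0}. (c i + real n * b i) * (\<alpha> i / \<alpha> i0) ^ n)" for n
    have h0: "h \<longlonglongrightarrow> 0"
      unfolding h_def
    proof (rule tendsto_null_sum)
      fix i assume "i \<in> I - {i0}"
      then have "\<bar>\<alpha> i / \<alpha> i0\<bar> < 1" using lt a0 by (simp add: abs_divide divide_less_eq)
      then show "(\<lambda>n. (c i + real n * b i) * (\<alpha> i / \<alpha> i0) ^ n) \<longlonglongrightarrow> 0"
        by (rule lin_pow_to0)
    qed
    have eq: "c i0 + real n * b i0 = - h n" if "n \<in> S" for n
    proof -
      have "(\<Sum>i\<in>I. (c i + real n * b i) * \<alpha> i ^ n) / \<alpha> i0 ^ n = 0"
        using less.prems that by simp
      also have "(\<Sum>i\<in>I. (c i + real n * b i) * \<alpha> i ^ n) / \<alpha> i0 ^ n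
          = (\<Sum>i\<in>I. (c i + real n * b i) * (\<alpha> i / \<alpha> i0) ^ n)"
        by (simp add: sum_divide_distrib power_divide)
      also have "\<dots> = (c i0 + real n * b i0) + h n"
        unfolding h_def using i0 less.prems(1) a0 by (simp add: sum.remove)
      finally show ?thesis by simp
    qed
    have unb: "\<exists>n\<in>S. n \<ge> N" for N using less.prems(2) infinite_nat_iff_unbounded_le by blast
    have b0: "b i0 = 0"
    proof (rule ccontr)
      assume bne: "b i0 \<noteq> 0"
      obtain N where N: "\<And>n. n \<ge> N \<Longrightarrow> \<bar>h n\<bar> < 1"
        using LIMSEQ_D[OF h0, of 1] by auto
      obtain n where n: "n \<in> S" "n \<ge> max N (nat \<lceil>(\<bar>c i0\<bar> + 2) / \<bar>b i0\<bar>\<rceil>)"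
        using unb by blast
      have "real n \<ge> (\<bar>c i0\<bar> + 2) / \<bar>b i0\<bar>" using n by linarith
      then have "real n * \<bar>b i0\<bar> \<ge> \<bar>c i0\<bar> + 2" using bne by (simp add: field_simps)
      then have "\<bar>c i0 + real n * b i0\<bar> \<ge> 2" by (simp add: abs_mult)
      moreover have "\<bar>h n\<bar> < 1" using N n by simp
      ultimately show False using eq[OF n(1)] by simp
    qed
    have c0: "c i0 = 0"
    proof (rule ccontr)
      assume cne: "c i0 \<noteq> 0"
      obtain N where N: "\<And>n. n \<ge> N \<Longrightarrow> \<bar>h n\<bar> < \<bar>c i0\<bar>"
        using LIMSEQ_D[OF h0, of "\<bar>c i0\<bar>"] cne by auto
      obtain n where n: "n \<in> S" "n \<ge> N" using unb by blast
      show False using eq[OF n(1)] N[OF n(2)] b0 by simp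
    qed
    have rest: "\<forall>n\<in>S. (\<Sum>i\<in>I - {i0}. (c i + real n * b i) * \<alpha> i ^ n) = 0"
    proof
      fix n assume "n \<in> S"
      then have "(\<Sum>i\<in>I. (c i + real n * b i) * \<alpha> i ^ n) = 0" using less.prems by simp
      then show "(\<Sum>i\<in>I - {i0}. (c i + real n * b i) * \<alpha> i ^ n) = 0"
        using i0 less.prems(1) b0 c0 by (simp add: sum.remove)
    qed
    have "\<forall>i\<in>I - {i0}. c i = 0 \<and> b i = 0"
      apply (rule less.hyps[of "I - {i0}"])
      using i0 less.prems rest card_gt_0_iff[of I] by auto
    then show ?thesis using b0 c0 by blast
  qed
qed

lemma avoid_hyperplanes:
  fixes U :: "(real ^ 'd) set"
  assumes "finite U" "0 \<notin> U"
  shows "\<exists>y. \<forall>u\<in>U. u \<bullet> y \<noteq> 0"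
proof -
  have "negligible (\<Union>u\<in>U. {y. u \<bullet> y = 0})"
    using assms by (intro negligible_Union) (auto intro!: negligible_hyperplane)
  then have "(\<Union>u\<in>U. {y. u \<bullet> y = 0}) \<noteq> UNIV" by auto
  then show ?thesis by auto
qed


lemma sum_split_opt:
  fixes G :: "nat \<times> 'd::finite option \<Rightarrow> real"
  shows "(\<Sum>p\<in>{..<m} \<times> (UNIV :: 'd option set). G p) = (\<Sum>i<m. G (i, None) + (\<Sum>s\<in>UNIV. G (i, Some s)))"
proof -
  have "(\<Sum>p\<in>{..<m} \<times> (UNIV :: 'd option set). G p) = (\<Sum>i<m. \<Sum>t\<in>(UNIV :: 'd option set). G (i, t))"
    by (simp add: sum.cartesian_product)
  also have "\<dots> = (\<Sum>i<m. G (i, None) + (\<Sum>s\<in>UNIV. G (i, Some s)))"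
  proof (rule sum.cong[OF refl])
    fix i
    have "(\<Sum>t\<in>(UNIV :: 'd option set). G (i, t)) = (\<Sum>t\<in>insert None (range Some). G (i, t))"
      by (simp only: UNIV_option_conv[symmetric])
    also have "\<dots> = G (i, None) + (\<Sum>t\<in>range Some. G (i, t))" by (subst sum.insert) auto
    also have "(\<Sum>t\<in>range Some. G (i, t)) = (\<Sum>s\<in>UNIV. G (i, Some s))"
      by (subst sum.reindex) (auto simp: inj_on_def)
    finally show "(\<Sum>t\<in>(UNIV :: 'd option set). G (i, t)) = G (i, None) + (\<Sum>s\<in>UNIV. G (i, Some s))" .
  qed
  finally show ?thesis .
qed

lemma key:
  fixes \<sigma> :: "real \<Rightarrow> real" and w v :: "nat \<Rightarrow> real ^ 'd" and y :: "real ^ 'd"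
  assumes r: "r > 0" and ser: "\<And>x. \<bar>x\<bar> < r \<Longrightarrow> (\<lambda>n. a n * x ^ n) sums \<sigma> x"
    and dser: "\<And>x. \<bar>x\<bar> < r \<Longrightarrow> (\<lambda>n. diffs a n * x ^ n) sums deriv \<sigma> x"
    and Sinf: "infinite S" and S: "\<forall>n\<in>S. a n \<noteq> 0 \<and> n \<ge> 1"
    and H: "\<forall>x. (\<Sum>i<m. c0 i * \<sigma> (w i \<bullet> x) + deriv \<sigma> (w i \<bullet> x) * (v i \<bullet> x)) = 0"
    and nz: "\<forall>i<m. w i \<bullet> y \<noteq> 0"
    and dist: "\<forall>i<m. \<forall>j<m. i \<noteq> j \<longrightarrow> \<bar>w i \<bullet> y\<bar> \<noteq> \<bar>w j \<bullet> y\<bar>"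
  shows "\<forall>i<m. c0 i = 0 \<and> v i \<bullet> y = 0"
proof -
  define \<alpha> where "\<alpha> i = w i \<bullet> y" for i
  define \<beta> where "\<beta> i = v i \<bullet> y" for i
  define Q where "Q = 1 + (\<Sum>i<m. \<bar>\<alpha> i\<bar>)"
  have Qpos: "Q > 0" unfolding Q_def by (simp add: sum_nonneg add_pos_nonneg)
  define \<rho> where "\<rho> = r / Q"
  have \<rho>pos: "\<rho> > 0" unfolding \<rho>_def using r Qpos by simp
  have small: "\<bar>t * \<alpha> i\<bar> < r" if "\<bar>t\<bar> < \<rho>" "i < m" for t i
  proof -
    have "\<bar>\<alpha> i\<bar> \<le> (\<Sum>i<m. \<bar>\<alpha> i\<bar>)" using that(2) by (intro member_le_sum) auto
    then have "\<bar>\<alpha> i\<bar> \<le> Q" unfolding Q_def by simp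
    then have "\<bar>t * \<alpha> i\<bar> \<le> \<bar>t\<bar> * Q" by (simp add: abs_mult mult_left_mono)
    also have "\<dots> < \<rho> * Q" using that(1) Qpos by (simp add: mult_strict_right_mono)
    also have "\<dots> = r" unfolding \<rho>_def using Qpos by simp
    finally show ?thesis .
  qed
  define E where "E i n = (if n = 0 then 0 else diffs a (n-1) * \<alpha> i ^ (n-1) * \<beta> i)" for i n
  define e where "e n = (\<Sum>i<m. c0 i * a n * \<alpha> i ^ n + E i n)" for n
  have esum: "(\<lambda>n. e n * t^n) sums 0" if t: "\<bar>t\<bar> < \<rho>" for t
  proof -
    have s1: "(\<lambda>n. c0 i * a n * \<alpha> i ^ n * t^n) sums (c0 i * \<sigma> (t * \<alpha> i))" if "i<m" for i
    proof -
      have "(\<lambda>n. a n * (t * \<alpha> i)^n) sums \<sigma> (t * \<alpha> i)" using ser small t that by blast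
      then have "(\<lambda>n. c0 i * (a n * (t*\<alpha> i)^n)) sums (c0 i * \<sigma> (t*\<alpha> i))" by (rule sums_mult)
      then show ?thesis by (simp add: power_mult_distrib mult_ac)
    qed
    have s2: "(\<lambda>n. E i n * t^n) sums (deriv \<sigma> (t * \<alpha> i) * (t * \<beta> i))" if "i<m" for i
    proof -
      have "(\<lambda>n. diffs a n * (t*\<alpha> i)^n) sums deriv \<sigma> (t*\<alpha> i)" using dser small t that by blast
      then have "(\<lambda>n. (diffs a n * (t*\<alpha> i)^n) * (t*\<beta> i)) sums (deriv \<sigma> (t*\<alpha> i) * (t * \<beta> i))"
        by (rule sums_mult2)
      then have "(\<lambda>n. E i (Suc n) * t^(Suc n)) sums (deriv \<sigma> (t*\<alpha> i) * (t*\<beta> i))"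
        by (simp add: E_def power_mult_distrib mult_ac)
      then have "(\<lambda>n. E i n * t^n) sums (deriv \<sigma> (t*\<alpha> i) * (t*\<beta> i) + E i 0 * t^0)"
        by (rule sums_Suc_iff[THEN iffD1])
      then show ?thesis by (simp add: E_def)
    qed
    have "(\<lambda>n. \<Sum>i<m. c0 i * a n * \<alpha> i ^ n * t^n + E i n * t^n) sums
          (\<Sum>i<m. c0 i * \<sigma> (t*\<alpha> i) + deriv \<sigma> (t*\<alpha> i) * (t*\<beta> i))"
      by (intro sums_sum sums_add s1 s2) auto
    moreover have "(\<Sum>i<m. c0 i * \<sigma> (t*\<alpha> i) + deriv \<sigma> (t*\<alpha> i) * (t*\<beta> i)) = 0"
      using H[rule_format, of "t *\<^sub>R y"] by (simp add: \<alpha>_def \<beta>_def mult_ac)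
    ultimately have "(\<lambda>n. \<Sum>i<m. c0 i * a n * \<alpha> i ^ n * t^n + E i n * t^n) sums 0" by simp
    then show ?thesis unfolding e_def sum_distrib_right distrib_right .
  qed
  have e0: "e n = 0" for n using powser_zero_unique[OF \<rho>pos esum] by blast
  have "\<forall>i\<in>{..<m}. c0 i = 0 \<and> \<beta> i / \<alpha> i = 0"
  proof (rule asym_indep[where S=S])
    show "\<forall>n\<in>S. (\<Sum>i\<in>{..<m}. (c0 i + real n * (\<beta> i / \<alpha> i)) * \<alpha> i ^ n) = 0"
    proof
      fix n assume n: "n \<in> S"
      then have an: "a n \<noteq> 0" "n \<ge> 1" using S by auto
      have En: "E i n = a n * (real n * (\<beta> i / \<alpha> i) * \<alpha> i ^ n)" if "i<m" for i
      proof -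
        obtain k where k: "n = Suc k" using an by (cases n) auto
        have "\<alpha> i \<noteq> 0" using nz that \<alpha>_def by auto
        then show ?thesis using k by (simp add: E_def diffs_def field_simps)
      qed
      have "e n = a n * (\<Sum>i<m. (c0 i + real n * (\<beta> i / \<alpha> i)) * \<alpha> i ^ n)"
        unfolding e_def sum_distrib_left
        by (rule sum.cong[OF refl]) (simp add: En algebra_simps)
      then show "(\<Sum>i\<in>{..<m}. (c0 i + real n * (\<beta> i / \<alpha> i)) * \<alpha> i ^ n) = 0"
        using e0 an by simp
    qed
  qed (use Sinf nz dist in \<open>auto simp: \<alpha>_def\<close>)
  then show ?thesis using nz by (auto simp: \<beta>_def \<alpha>_def)
qed



theorem mainTheorem13:
  fixes \<sigma> :: "real \<Rightarrow> real"
    and w :: "nat \<Rightarrow> real ^ 'd"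
    and m :: nat
  assumes "real_analytic \<sigma>"
    and "infinite {n. (deriv ^^ n) \<sigma> 0 \<noteq> 0}"
    and "\<forall>i<m. w i \<noteq> 0"
    and "\<forall>k<m. \<forall>j<m. k < j \<longrightarrow> w k \<noteq> w j \<and> w k \<noteq> - w j"
  shows "lin_indep_family ({..<m} \<times> (UNIV :: 'd option set))
           (\<lambda>(i, t) x. case t of
                None \<Rightarrow> \<sigma> (w i \<bullet> x)
              | Some s \<Rightarrow> deriv \<sigma> (w i \<bullet> x) * x $ s)"
  unfolding lin_indep_family_def
proof (intro allI impI)
  fix c :: "nat \<times> 'd option \<Rightarrow> real"
  assume H0: "\<forall>x. (\<Sum>p\<in>{..<m} \<times> (UNIV :: 'd option set). c p * (case p of (i, t) \<Rightarrow> (\<lambda>x. case t of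
                None \<Rightarrow> \<sigma> (w i \<bullet> x)
              | Some s \<Rightarrow> deriv \<sigma> (w i \<bullet> x) * x $ s)) x) = 0"
  obtain r a where r: "r > 0" and ser0: "\<forall>x. \<bar>x - 0\<bar> < r \<longrightarrow> (\<lambda>n. a n * (x - 0) ^ n) sums \<sigma> x"
    using assms(1) unfolding real_analytic_def by blast
  have ser: "\<And>x. \<bar>x\<bar> < r \<Longrightarrow> (\<lambda>n. a n * x ^ n) sums \<sigma> x" using ser0 by simp
  have dser: "(\<lambda>n. diffs a n * x ^ n) sums deriv \<sigma> x" if x: "\<bar>x\<bar> < r" for x
  proof -
    have "(\<lambda>k. (diffs ^^ 1) a k * x ^ k) sums (deriv ^^ 1) \<sigma> x"
      using x by (intro higher_deriv_powser_sums[where r=r]) (auto intro: ser)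
    then show ?thesis by simp
  qed
  have aS: "{n. a n \<noteq> 0} = {n. (deriv ^^ n) \<sigma> 0 \<noteq> 0}"
    using higher_deriv_powser[OF r ser] by auto
  define S where "S = {n. a n \<noteq> 0} - {0}"
  have Sinf: "infinite S" using assms(2) aS unfolding S_def
    by (metis Diff_infinite_finite finite.emptyI finite_insert)
  have Sp: "\<forall>n\<in>S. a n \<noteq> 0 \<and> n \<ge> 1" unfolding S_def by auto
  define c0 where "c0 i = c (i, None)" for i
  define v where "v i = (\<chi> s. c (i, Some s))" for i
  have H: "\<forall>x. (\<Sum>i<m. c0 i * \<sigma> (w i \<bullet> x) + deriv \<sigma> (w i \<bullet> x) * (v i \<bullet> x)) = 0"
  proof
    fix x :: "real ^ 'd"
    have "(\<Sum>p\<in>{..<m} \<times> (UNIV :: 'd option set). c p * (case p of (i, t) \<Rightarrow> (\<lambda>x. case t of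
                None \<Rightarrow> \<sigma> (w i \<bullet> x)
              | Some s \<Rightarrow> deriv \<sigma> (w i \<bullet> x) * x $ s)) x)
        = (\<Sum>i<m. c0 i * \<sigma> (w i \<bullet> x) + deriv \<sigma> (w i \<bullet> x) * (v i \<bullet> x))"
      by (simp add: sum_split_opt c0_def v_def inner_vec_def sum_distrib_right mult_ac)
    then show "(\<Sum>i<m. c0 i * \<sigma> (w i \<bullet> x) + deriv \<sigma> (w i \<bullet> x) * (v i \<bullet> x)) = 0"
      using H0 by simp
  qed
  define P where "P = {(i, j). i < m \<and> j < m \<and> i \<noteq> j}"
  have finP: "finite P" by (rule finite_subset[of P "{..<m} \<times> {..<m}"]) (auto simp: P_def)
  define U where "U = w ` {..<m} \<union> (\<lambda>(i, j). w i - w j) ` P \<union> (\<lambda>(i, j). w i + w j) ` P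
                     \<union> (v ` {..<m} - {0})"
  have finU: "finite U" unfolding U_def using finP by auto
  have ne: "w i \<noteq> w j \<and> w i \<noteq> - w j" if "i < m" "j < m" "i \<noteq> j" for i j
  proof (cases "i < j")
    case True then show ?thesis using assms(4) that by blast
  next
    case False
    then have "j < i" using that by simp
    then have "w j \<noteq> w i \<and> w j \<noteq> - w i" using assms(4) that by blast
    then show ?thesis by (metis minus_minus)
  qed
  have U0: "0 \<notin> U"
  proof
    assume "0 \<in> U"
    then show False unfolding U_def P_def using assms(3) ne
      by (auto simp: eq_neg_iff_add_eq_0[symmetric])
  qed
  obtain y where y: "\<forall>u\<in>U. u \<bullet> y \<noteq> 0" using avoid_hyperplanes[OF finU U0] by blast
  have nz: "\<forall>i<m. w i \<bullet> y \<noteq> 0" using y unfolding U_def by auto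
  have dist: "\<forall>i<m. \<forall>j<m. i \<noteq> j \<longrightarrow> \<bar>w i \<bullet> y\<bar> \<noteq> \<bar>w j \<bullet> y\<bar>"
  proof (intro allI impI)
    fix i j assume ij: "i < m" "j < m" "i \<noteq> j"
    then have "(i, j) \<in> P" unfolding P_def by simp
    then have "(w i - w j) \<bullet> y \<noteq> 0" "(w i + w j) \<bullet> y \<noteq> 0" using y unfolding U_def by force+
    then show "\<bar>w i \<bullet> y\<bar> \<noteq> \<bar>w j \<bullet> y\<bar>" by (auto simp: inner_diff_left inner_add_left abs_eq_iff)
  qed
  have res: "\<forall>i<m. c0 i = 0 \<and> v i \<bullet> y = 0"
    by (rule key[OF r ser dser Sinf Sp H nz dist])
  have v0: "v i = 0" if "i < m" for i
  proof (rule ccontr)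
    assume "v i \<noteq> 0"
    then have "v i \<in> U" unfolding U_def using that by auto
    then show False using y res that by auto
  qed
  show "\<forall>p\<in>{..<m} \<times> (UNIV :: 'd option set). c p = 0"
  proof
    fix p assume p: "p \<in> {..<m} \<times> (UNIV :: 'd option set)"
    obtain i t where it: "p = (i, t)" by fastforce
    have im: "i < m" using p it by simp
    show "c p = 0"
    proof (cases t)
      case None then show ?thesis using res im it c0_def by simp
    next
      case (Some s)
      have "v i $ s = 0" using v0 im by simp
      then show ?thesis using it Some v_def by simp
    qed
  qed
qed


end
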